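(* Let $S$ be a memory system satisfying the Causality and Data Independence assumptions. For all $n,m\ge1$: every trace of $S(n,m)$ is sequentially consistent if and only if there is a witness $\Omega$ for $S(n,m)$ such that the graph $G(\Omega)(\tau)$ is acyclic for every unambiguous trace $\tau$ of $S(n,m)$.
   Context: Notation: $\mathbb{N}_n=\{1,\dots,n\}$, $\mathbb{W}_n=\{0,\dots,n\}$, $\mathbb{W}=\{0,1,2,\dots\}$. Memory events $E(n,m,v)=\{R,W\}\times\mathbb{N}_n\times\mathbb{N}_m\times\mathbb{W}_v$; for $e=\langle a,b,c,d\rangle$, $op(e)=a$, $proc(e)=b$, $loc(e)=c$, $data(e)=d$; $0$ models the initial value of every location. A memory system is a family $S=(S(n,m,v))_{n,m,v\ge1}$, $S(n,m,v)$ a regular set of finite runs over an alphabet $E^a(n,m,v)\supseteq E(n,m,v)$ (other letters are internal events); $S(n,m)=\bigcup_{v\ge1}S(n,m,v)$. The trace of a run is its subsequence of memory events; traces of $S(n,m,v)$ (resp. $S(n,m)$) are traces of its runs. For a sequence $\tau$ of memory events with positions $1,\dots,|\tau|$: $P(\tau,i)=\{k: proc(\tau(k))=i\}$, $L(\tau,j)=\{k: loc(\tau(k))=j\}$, $L^w(\tau,j)=\{k\in L(\tau,j): op(\tau(k))=W\}$, $L^r(\tau,j)=\{k\in L(\tau,j): op(\tau(k))=R\}$. A trace $\tau$ is unambiguous if for every location $j$ and $x\in L^w(\tau,j)$, $data(\tau(x))\ne0$ and $data(\tau(x))\ne data(\tau(y))$ for all $y\in L^w(\tau,j)\setminus\{x\}$.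 Causality assumption: for all $n,m,v\ge1$, every trace $\tau$ of $S(n,m,v)$, every location $j$ and every $x\in L^r(\tau,j)$, either $data(\tau(x))=0$ or there is $y\in L^w(\tau,j)$ with $data(\tau(x))=data(\tau(y))$. Data Independence assumption: a renaming function is $\lambda:\mathbb{N}_m\times\mathbb{W}\to\mathbb{W}$ with $\lambda(j,0)=0$ for all $j$, inducing $\lambda^d(\langle a,b,c,d\rangle)=\langle a,b,c,\lambda(c,d)\rangle$ letterwise on sequences; for all $n,m,v\ge1$ and $\tau\in E(n,m,v)^*$, $\tau$ is a trace of $S(n,m,v)$ iff there are an unambiguous trace $\tau'$ of $S(n,m)$ and a renaming function $\lambda:\mathbb{N}_m\times\mathbb{W}\to\mathbb{W}_v$ with $\tau=\lambda^d(\tau')$. Sequential consistency: $\tau$ is serial if for every position $u$, with $upto(\tau,u)=\{k\le u: op(\tau(k))=W,\ loc(\tau(k))=loc(\tau(u))\}$, $data(\tau(u))=0$ when $upto(\tau,u)=\emptyset$ and $data(\tau(u))=data(\tau(\max upto(\tau,u)))$ otherwise. $M(\tau,i)=\{\langle u,v\rangle: u,v\in P(\tau,i), u<v\}$. $\tau$ is sequentially consistent if some permutation $f$ of $\mathbb{N}_{|\tau|}$ satisfies (C1) $\langle u,v\rangle\in M(\tau,i)$ for some $i$ implies $f(u)<f(v)$, and (C2) $\tau_{f^{-1}(1)}\cdots\tau_{f^{-1}(|\tau|)}$ is serial. A witness $\Omega$ for $S(n,m)$ assigns to every trace $\tau$ of $S(n,m)$ and location $j$ a strict total order $\Omega(\tau,j)$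 on $L^w(\tau,j)$. For unambiguous $\tau$, $\Omega^e(\tau,j)\subseteq L(\tau,j)^2$: $\langle x,y\rangle\in\Omega^e(\tau,j)$ iff (1) $data(\tau(x))=data(\tau(y))$, $op(\tau(x))=W$, $op(\tau(y))=R$; or (2) $data(\tau(x))=0$ and $data(\tau(y))\ne0$; or (3) there are $a,b\in L^w(\tau,j)$ with $\langle a,b\rangle\in\Omega(\tau,j)$, $data(\tau(a))=data(\tau(x))$, $data(\tau(b))=data(\tau(y))$. The constraint graph $G(\Omega)(\tau)$ is the directed graph with vertex set $\{1,\dots,|\tau|\}$ and edge set $\bigcup_{1\le i\le n}M(\tau,i)\cup\bigcup_{1\le j\le m}\Omega^e(\tau,j)$. *)

theory Defs
  imports Main
begin

datatype opk = R | W

type_synonym event = "opk \<times> nat \<times> nat \<times> nat"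

definition op :: "event \<Rightarrow> opk" where "op e = fst e"
definition proc :: "event \<Rightarrow> nat" where "proc e = fst (snd e)"
definition loc :: "event \<Rightarrow> nat" where "loc e = fst (snd (snd e))"
definition data :: "event \<Rightarrow> nat" where "data e = snd (snd (snd e))"

definition E :: "nat \<Rightarrow> nat \<Rightarrow> nat \<Rightarrow> event set" where
  "E n m v = {e. proc e \<in> {1..n} \<and> loc e \<in> {1..m} \<and> data e \<le> v}"

datatype 'i letter = Mem event | Internal 'i

fun is_mem :: "'i letter \<Rightarrow> bool" where
  "is_mem (Mem e) = True" | "is_mem (Internal _) = False"

fun the_mem :: "'i letter \<Rightarrow> event" where
  "the_mem (Mem e) = e" | "the_mem (Internal _) = undefined"

definition trace_of :: "'i letter list \<Rightarrow> event list" where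
  "trace_of r = map the_mem (filter is_mem r)"

definition regular_on :: "'a set \<Rightarrow> 'a list set \<Rightarrow> bool" where
  "regular_on A L \<longleftrightarrow>
     (\<exists>(Q :: nat set) q0 \<delta> F. finite Q \<and> q0 \<in> Q \<and> (\<forall>q\<in>Q. \<forall>a\<in>A. \<delta> q a \<in> Q) \<and> F \<subseteq> Q \<and>
        L = {w. set w \<subseteq> A \<and> foldl \<delta> q0 w \<in> F})"

definition memory_system ::
  "(nat \<Rightarrow> nat \<Rightarrow> nat \<Rightarrow> 'i letter set) \<Rightarrow> (nat \<Rightarrow> nat \<Rightarrow> nat \<Rightarrow> 'i letter list set) \<Rightarrow> bool" where
  "memory_system Ea S \<longleftrightarrow>
     (\<forall>n m v. n \<ge> 1 \<and> m \<ge> 1 \<and> v \<ge> 1 \<longrightarrow>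
        finite (Ea n m v) \<and> (\<forall>e. Mem e \<in> Ea n m v \<longleftrightarrow> e \<in> E n m v) \<and>
        regular_on (Ea n m v) (S n m v))"

definition traces :: "(nat \<Rightarrow> nat \<Rightarrow> nat \<Rightarrow> 'i letter list set) \<Rightarrow> nat \<Rightarrow> nat \<Rightarrow> nat \<Rightarrow> event list set" where
  "traces S n m v = trace_of ` S n m v"

definition traces_nm :: "(nat \<Rightarrow> nat \<Rightarrow> nat \<Rightarrow> 'i letter list set) \<Rightarrow> nat \<Rightarrow> nat \<Rightarrow> event list set" where
  "traces_nm S n m = (\<Union>v\<in>{v. v \<ge> 1}. traces S n m v)"

section \<open>Positions in sequences (1-based, as in the paper)\<close>

definition ev :: "event list \<Rightarrow> nat \<Rightarrow> event" where
  "ev \<tau> k = \<tau> ! (k - 1)"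

definition pos :: "event list \<Rightarrow> nat set" where
  "pos \<tau> = {1..length \<tau>}"

definition Pset :: "event list \<Rightarrow> nat \<Rightarrow> nat set" where
  "Pset \<tau> i = {k \<in> pos \<tau>. proc (ev \<tau> k) = i}"

definition Lset :: "event list \<Rightarrow> nat \<Rightarrow> nat set" where
  "Lset \<tau> j = {k \<in> pos \<tau>. loc (ev \<tau> k) = j}"

definition Lw :: "event list \<Rightarrow> nat \<Rightarrow> nat set" where
  "Lw \<tau> j = {k \<in> Lset \<tau> j. op (ev \<tau> k) = W}"

definition Lr :: "event list \<Rightarrow> nat \<Rightarrow> nat set" where
  "Lr \<tau> j = {k \<in> Lset \<tau> j. op (ev \<tau> k) = R}"

definition unambiguous :: "event list \<Rightarrow> bool" where
  "unambiguous \<tau> \<longleftrightarrow>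
     (\<forall>j. \<forall>x\<in>Lw \<tau> j. data (ev \<tau> x) \<noteq> 0 \<and>
        (\<forall>y\<in>Lw \<tau> j - {x}. data (ev \<tau> x) \<noteq> data (ev \<tau> y)))"

definition causality :: "(nat \<Rightarrow> nat \<Rightarrow> nat \<Rightarrow> 'i letter list set) \<Rightarrow> bool" where
  "causality S \<longleftrightarrow>
     (\<forall>n m v. n \<ge> 1 \<and> m \<ge> 1 \<and> v \<ge> 1 \<longrightarrow>
       (\<forall>\<tau>\<in>traces S n m v. \<forall>j. \<forall>x\<in>Lr \<tau> j.
          data (ev \<tau> x) = 0 \<or> (\<exists>y\<in>Lw \<tau> j. data (ev \<tau> x) = data (ev \<tau> y))))"

definition renaming :: "nat \<Rightarrow> nat \<Rightarrow> (nat \<Rightarrow> nat \<Rightarrow> nat) \<Rightarrow> bool" where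
  "renaming m v lam \<longleftrightarrow> (\<forall>j\<in>{1..m}. lam j 0 = 0 \<and> (\<forall>d. lam j d \<le> v))"

definition rename_ev :: "(nat \<Rightarrow> nat \<Rightarrow> nat) \<Rightarrow> event \<Rightarrow> event" where
  "rename_ev lam e = (op e, proc e, loc e, lam (loc e) (data e))"

definition data_independence :: "(nat \<Rightarrow> nat \<Rightarrow> nat \<Rightarrow> 'i letter list set) \<Rightarrow> bool" where
  "data_independence S \<longleftrightarrow>
     (\<forall>n m v. n \<ge> 1 \<and> m \<ge> 1 \<and> v \<ge> 1 \<longrightarrow>
       (\<forall>\<tau>. set \<tau> \<subseteq> E n m v \<longrightarrow>
          (\<tau> \<in> traces S n m v \<longleftrightarrow>
            (\<exists>\<tau>'\<in>traces_nm S n m. unambiguous \<tau>' \<and>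
               (\<exists>lam. renaming m v lam \<and> \<tau> = map (rename_ev lam) \<tau>')))))"

definition upto :: "event list \<Rightarrow> nat \<Rightarrow> nat set" where
  "upto \<tau> u = {k. 1 \<le> k \<and> k \<le> u \<and> op (ev \<tau> k) = W \<and> loc (ev \<tau> k) = loc (ev \<tau> u)}"

definition serial :: "event list \<Rightarrow> bool" where
  "serial \<tau> \<longleftrightarrow>
     (\<forall>u\<in>pos \<tau>. (upto \<tau> u = {} \<longrightarrow> data (ev \<tau> u) = 0) \<and>
                 (upto \<tau> u \<noteq> {} \<longrightarrow> data (ev \<tau> u) = data (ev \<tau> (Max (upto \<tau> u)))))"

definition Mrel :: "event list \<Rightarrow> nat \<Rightarrow> (nat \<times> nat) set" where
  "Mrel \<tau> i = {(u, v). u \<in> Pset \<tau> i \<and> v \<in> Pset \<tau> i \<and> u < v}"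

definition permute :: "event list \<Rightarrow> (nat \<Rightarrow> nat) \<Rightarrow> event list" where
  "permute \<tau> f = map (\<lambda>k. ev \<tau> (inv_into (pos \<tau>) f k)) [1..<length \<tau> + 1]"

definition seq_consistent :: "event list \<Rightarrow> bool" where
  "seq_consistent \<tau> \<longleftrightarrow>
     (\<exists>f. bij_betw f (pos \<tau>) (pos \<tau>) \<and>
          (\<forall>i u v. (u, v) \<in> Mrel \<tau> i \<longrightarrow> f u < f v) \<and>
          serial (permute \<tau> f))"

definition witness ::
  "(nat \<Rightarrow> nat \<Rightarrow> nat \<Rightarrow> 'i letter list set) \<Rightarrow> nat \<Rightarrow> nat \<Rightarrow> (event list \<Rightarrow> nat \<Rightarrow> (nat \<times> nat) set) \<Rightarrow> bool" where
  "witness S n m \<Omega> \<longleftrightarrow>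
     (\<forall>\<tau>\<in>traces_nm S n m. \<forall>j\<in>{1..m}.
        \<Omega> \<tau> j \<subseteq> Lw \<tau> j \<times> Lw \<tau> j \<and> strict_linear_order_on (Lw \<tau> j) (\<Omega> \<tau> j))"

definition Omega_e :: "(event list \<Rightarrow> nat \<Rightarrow> (nat \<times> nat) set) \<Rightarrow> event list \<Rightarrow> nat \<Rightarrow> (nat \<times> nat) set" where
  "Omega_e \<Omega> \<tau> j = {(x, y). x \<in> Lset \<tau> j \<and> y \<in> Lset \<tau> j \<and>
     ((data (ev \<tau> x) = data (ev \<tau> y) \<and> op (ev \<tau> x) = W \<and> op (ev \<tau> y) = R) \<or>
      (data (ev \<tau> x) = 0 \<and> data (ev \<tau> y) \<noteq> 0) \<or>
      (\<exists>a\<in>Lw \<tau> j. \<exists>b\<in>Lw \<tau> j. (a, b) \<in> \<Omega> \<tau> j \<and>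
          data (ev \<tau> a) = data (ev \<tau> x) \<and> data (ev \<tau> b) = data (ev \<tau> y)))}"

definition cgraph :: "nat \<Rightarrow> nat \<Rightarrow> (event list \<Rightarrow> nat \<Rightarrow> (nat \<times> nat) set) \<Rightarrow> event list \<Rightarrow> (nat \<times> nat) set" where
  "cgraph n m \<Omega> \<tau> = (\<Union>i\<in>{1..n}. Mrel \<tau> i) \<union> (\<Union>j\<in>{1..m}. Omega_e \<Omega> \<tau> j)"

end

theory Submission
  imports Defs
begin


lemma topo:
  assumes "finite A" "acyclic G"
  shows "\<exists>f. bij_betw f A {1..card A} \<and> (\<forall>u v. (u,v)\<in>G \<longrightarrow> u\<in>A \<longrightarrow> v\<in>A \<longrightarrow> f u < f v)"
  using assms(1)
proof (induction A rule: finite_psubset_induct)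
  case (psubset A)
  show ?case
  proof (cases "A = {}")
    case True
    then show ?thesis by (auto simp: bij_betw_def)
  next
    case False
    define H where "H = G \<inter> (A \<times> A)"
    have fH: "finite H" using psubset.hyps unfolding H_def by auto
    have aH: "acyclic H" using assms(2) acyclic_subset unfolding H_def by blast
    have "wf (H\<inverse>)" by (rule finite_acyclic_wf_converse[OF fH aH])
    then obtain a where aA: "a \<in> A" and amax: "\<And>y. (y, a) \<in> H\<inverse> \<Longrightarrow> y \<notin> A"
      using False by (metis ex_in_conv wf_eq_minimal)
    have noedge: "\<And>b. b \<in> A \<Longrightarrow> (a,b) \<notin> G" using amax aA unfolding H_def by auto
    define B where "B = A - {a}"
    have "B \<subset> A" using aA unfolding B_def by auto
    then obtain g where g: "bij_betw g B {1..card B}"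
      and gm: "\<forall>u v. (u,v)\<in>G \<longrightarrow> u\<in>B \<longrightarrow> v\<in>B \<longrightarrow> g u < g v"
      using psubset.IH by blast
    have cB: "card A = Suc (card B)"
    proof -
      have "card A > 0" using aA psubset.hyps card_gt_0_iff by blast
      moreover have "card B = card A - 1" using aA psubset.hyps unfolding B_def by simp
      ultimately show ?thesis by simp
    qed
    define f where "f = g(a := card A)"
    have AB: "A = insert a B" "a \<notin> B" using aA unfolding B_def by auto
    have gB: "inj_on g B" "g ` B = {1..card B}" using g by (auto simp: bij_betw_def)
    have "inj_on f A"
    proof (rule inj_onI)
      fix x y assume xy: "x \<in> A" "y \<in> A" "f x = f y"
      show "x = y"
      proof (cases "x = a"; cases "y = a")
        assume "x = a" "y \<noteq> a"
        then have "y \<in> B" "f y = g y" "f x = card A" using xy AB unfolding f_def by auto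
        moreover have "g y \<le> card B" using gB \<open>y \<in> B\<close> by (metis atLeastAtMost_iff imageI)
        ultimately show ?thesis using cB xy by simp
      next
        assume "x \<noteq> a" "y = a"
        then have "x \<in> B" "f x = g x" "f y = card A" using xy AB unfolding f_def by auto
        moreover have "g x \<le> card B" using gB \<open>x \<in> B\<close> by (metis atLeastAtMost_iff imageI)
        ultimately show ?thesis using cB xy by simp
      next
        assume "x \<noteq> a" "y \<noteq> a"
        then have "x \<in> B" "y \<in> B" "f x = g x" "f y = g y" using xy AB unfolding f_def by auto
        then show ?thesis using gB xy by (metis inj_onD)
      qed simp
    qed
    moreover have "f ` A = {1..card A}"
    proof -
      have "f ` A = insert (f a) (f ` B)" using AB by simp
      also have "f ` B = g ` B" unfolding f_def using AB by (intro image_cong) auto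
      also have "f a = card A" unfolding f_def by simp
      finally show ?thesis using gB cB by auto
    qed
    ultimately have bf: "bij_betw f A {1..card A}" by (simp add: bij_betw_def)
    have "\<forall>u v. (u,v)\<in>G \<longrightarrow> u\<in>A \<longrightarrow> v\<in>A \<longrightarrow> f u < f v"
    proof (intro allI impI)
      fix u v assume uv: "(u,v)\<in>G" "u\<in>A" "v\<in>A"
      have "u \<noteq> a" using noedge uv by auto
      show "f u < f v"
      proof (cases "v = a")
        case True
        have "u \<in> B" using \<open>u \<noteq> a\<close> uv unfolding B_def by auto
        then have "g u \<le> card B" using g by (auto simp: bij_betw_def)
        then show ?thesis using True \<open>u \<noteq> a\<close> cB unfolding f_def by auto
      next
        case False
        then show ?thesis using gm uv \<open>u \<noteq> a\<close> unfolding f_def B_def by auto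
      qed
    qed
    then show ?thesis using bf by blast
  qed
qed


definition scond :: "event list \<Rightarrow> (nat \<Rightarrow> nat) \<Rightarrow> nat \<Rightarrow> bool" where
  "scond \<tau> f y \<longleftrightarrow>
    (let U = {x\<in>pos \<tau>. op (ev \<tau> x) = W \<and> loc (ev \<tau> x) = loc (ev \<tau> y) \<and> f x \<le> f y} in
     (U = {} \<longrightarrow> data (ev \<tau> y) = 0) \<and>
     (U \<noteq> {} \<longrightarrow> (\<exists>x\<in>U. (\<forall>z\<in>U. f z \<le> f x) \<and> data (ev \<tau> y) = data (ev \<tau> x))))"

lemma length_permute[simp]: "length (permute \<tau> f) = length \<tau>"
  by (simp add: permute_def del: upt_Suc)

lemma pos_permute[simp]: "pos (permute \<tau> f) = pos \<tau>"
  by (simp add: pos_def)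

lemma ev_permute:
  assumes "bij_betw f (pos \<tau>) (pos \<tau>)" "y \<in> pos \<tau>"
  shows "ev (permute \<tau> f) (f y) = ev \<tau> y"
proof -
  have fy: "f y \<in> pos \<tau>" using assms bij_betwE by blast
  then have "1 \<le> f y" "f y \<le> length \<tau>" by (auto simp: pos_def)
  moreover have "[Suc 0..<Suc (length \<tau>)] ! (f y - Suc 0) = f y"
    using calculation by (subst nth_upt) auto
  ultimately have "ev (permute \<tau> f) (f y) = ev \<tau> (inv_into (pos \<tau>) f (f y))"
    by (simp add: permute_def ev_def del: upt_Suc)
  also have "inv_into (pos \<tau>) f (f y) = y"
    using assms by (simp add: bij_betw_def inv_into_f_f)
  finally show ?thesis .
qed

lemma upto_permute:
  assumes "bij_betw f (pos \<tau>) (pos \<tau>)" "y \<in> pos \<tau>"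
  shows "upto (permute \<tau> f) (f y) =
    f ` {x\<in>pos \<tau>. op (ev \<tau> x) = W \<and> loc (ev \<tau> x) = loc (ev \<tau> y) \<and> f x \<le> f y}"
proof (rule set_eqI)
  fix k
  have fy: "f y \<in> pos \<tau>" using assms bij_betwE by blast
  show "k \<in> upto (permute \<tau> f) (f y) \<longleftrightarrow>
    k \<in> f ` {x\<in>pos \<tau>. op (ev \<tau> x) = W \<and> loc (ev \<tau> x) = loc (ev \<tau> y) \<and> f x \<le> f y}"
  proof
    assume k: "k \<in> upto (permute \<tau> f) (f y)"
    then have "k \<in> pos \<tau>" using fy by (auto simp: upto_def pos_def)
    then obtain x where x: "x \<in> pos \<tau>" "k = f x" using assms(1) by (metis bij_betw_def imageE)
    show "k \<in> f ` {x\<in>pos \<tau>. op (ev \<tau> x) = W \<and> loc (ev \<tau> x) = loc (ev \<tau> y) \<and> f x \<le> f y}"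
      using k x ev_permute[OF assms(1) x(1)] ev_permute[OF assms] by (auto simp: upto_def)
  next
    assume "k \<in> f ` {x\<in>pos \<tau>. op (ev \<tau> x) = W \<and> loc (ev \<tau> x) = loc (ev \<tau> y) \<and> f x \<le> f y}"
    then obtain x where x: "x \<in> pos \<tau>" "k = f x" "op (ev \<tau> x) = W" "loc (ev \<tau> x) = loc (ev \<tau> y)" "f x \<le> f y"
      by auto
    have "f x \<in> pos \<tau>" using assms(1) x(1) bij_betwE by blast
    then show "k \<in> upto (permute \<tau> f) (f y)"
      using x ev_permute[OF assms(1) x(1)] ev_permute[OF assms] by (auto simp: upto_def pos_def)
  qed
qed

lemma serial_iff:
  assumes "bij_betw f (pos \<tau>) (pos \<tau>)"
  shows "serial (permute \<tau> f) \<longleftrightarrow> (\<forall>y\<in>pos \<tau>. scond \<tau> f y)"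
proof -
  have "serial (permute \<tau> f) \<longleftrightarrow> (\<forall>u\<in>f ` pos \<tau>.
     (upto (permute \<tau> f) u = {} \<longrightarrow> data (ev (permute \<tau> f) u) = 0) \<and>
     (upto (permute \<tau> f) u \<noteq> {} \<longrightarrow> data (ev (permute \<tau> f) u) =
        data (ev (permute \<tau> f) (Max (upto (permute \<tau> f) u)))))"
    using assms unfolding serial_def by (simp add: bij_betw_def)
  also have "\<dots> \<longleftrightarrow> (\<forall>y\<in>pos \<tau>. scond \<tau> f y)"
  proof -
    have "((upto (permute \<tau> f) (f y) = {} \<longrightarrow> data (ev (permute \<tau> f) (f y)) = 0) \<and>
     (upto (permute \<tau> f) (f y) \<noteq> {} \<longrightarrow> data (ev (permute \<tau> f) (f y)) =
        data (ev (permute \<tau> f) (Max (upto (permute \<tau> f) (f y)))))) \<longleftrightarrow> scond \<tau> f y"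
      if y: "y \<in> pos \<tau>" for y
    proof -
      define U where "U = {x\<in>pos \<tau>. op (ev \<tau> x) = W \<and> loc (ev \<tau> x) = loc (ev \<tau> y) \<and> f x \<le> f y}"
      have up: "upto (permute \<tau> f) (f y) = f ` U" unfolding U_def by (rule upto_permute[OF assms y])
      have evy: "ev (permute \<tau> f) (f y) = ev \<tau> y" by (rule ev_permute[OF assms y])
      have Upos: "U \<subseteq> pos \<tau>" unfolding U_def by auto
      have fU: "finite U" using Upos finite_subset by (auto simp: pos_def)
      have maxeq: "(data (ev \<tau> y) = data (ev (permute \<tau> f) (Max (f ` U)))) \<longleftrightarrow>
          (\<exists>x\<in>U. (\<forall>z\<in>U. f z \<le> f x) \<and> data (ev \<tau> y) = data (ev \<tau> x))" if ne: "U \<noteq> {}"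
      proof
        assume h: "data (ev \<tau> y) = data (ev (permute \<tau> f) (Max (f ` U)))"
        have "Max (f ` U) \<in> f ` U" using fU ne by simp
        then obtain x where x: "x \<in> U" "Max (f ` U) = f x" by auto
        have "\<forall>z\<in>U. f z \<le> f x" using fU x by (metis Max_ge finite_imageI imageI)
        moreover have "ev (permute \<tau> f) (f x) = ev \<tau> x" using x Upos ev_permute[OF assms] by auto
        ultimately show "\<exists>x\<in>U. (\<forall>z\<in>U. f z \<le> f x) \<and> data (ev \<tau> y) = data (ev \<tau> x)"
          using h x by metis
      next
        assume "\<exists>x\<in>U. (\<forall>z\<in>U. f z \<le> f x) \<and> data (ev \<tau> y) = data (ev \<tau> x)"
        then obtain x where x: "x \<in> U" "\<forall>z\<in>U. f z \<le> f x" "data (ev \<tau> y) = data (ev \<tau> x)" by blast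
        have "Max (f ` U) = f x" using x fU by (intro Max_eqI) auto
        moreover have "ev (permute \<tau> f) (f x) = ev \<tau> x" using x Upos ev_permute[OF assms] by auto
        ultimately show "data (ev \<tau> y) = data (ev (permute \<tau> f) (Max (f ` U)))" using x by simp
      qed
      show ?thesis unfolding up evy scond_def Let_def U_def[symmetric] using maxeq by auto
    qed
    then show ?thesis by auto
  qed
  finally show ?thesis .
qed


lemma acyc_of_rank:
  assumes "r \<subseteq> {(x,y). h x < (h y :: nat)}"
  shows "acyclic r"
proof -
  have "r \<subseteq> inv_image less_than h" using assms by auto
  then have "wf r" using wf_subset wf_inv_image wf_less_than by blast
  then show ?thesis by (rule wf_acyclic)
qed

lemma Lw_in: "x \<in> Lw \<tau> j \<Longrightarrow> x \<in> pos \<tau> \<and> loc (ev \<tau> x) = j \<and> op (ev \<tau> x) = W"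
  by (auto simp: Lw_def Lset_def)

lemma unamb_nz: "unambiguous \<tau> \<Longrightarrow> x \<in> Lw \<tau> j \<Longrightarrow> data (ev \<tau> x) \<noteq> 0"
  unfolding unambiguous_def by blast

lemma unamb_eq: "unambiguous \<tau> \<Longrightarrow> x \<in> Lw \<tau> j \<Longrightarrow> y \<in> Lw \<tau> j \<Longrightarrow>
   data (ev \<tau> x) = data (ev \<tau> y) \<Longrightarrow> x = y"
  unfolding unambiguous_def by blast

lemma sc_zero:
  assumes "scond \<tau> f y" "y \<in> Lset \<tau> j" "data (ev \<tau> y) = 0" "unambiguous \<tau>" "z \<in> Lw \<tau> j"
  shows "f y < f z"
proof (rule ccontr)
  assume "\<not> f y < f z"
  then have "z \<in> {x\<in>pos \<tau>. op (ev \<tau> x) = W \<and> loc (ev \<tau> x) = loc (ev \<tau> y) \<and> f x \<le> f y}"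
    using assms(2,5) by (auto simp: Lw_def Lset_def)
  then obtain x where "x \<in> pos \<tau>" "op (ev \<tau> x) = W" "loc (ev \<tau> x) = j" "data (ev \<tau> y) = data (ev \<tau> x)"
    using assms(1,2) unfolding scond_def Let_def Lset_def by (smt (verit, del_insts) empty_iff mem_Collect_eq)
  then have "x \<in> Lw \<tau> j" by (auto simp: Lw_def Lset_def)
  then show False using unamb_nz[OF assms(4)] assms(3) \<open>data (ev \<tau> y) = data (ev \<tau> x)\<close> by metis
qed

lemma sc_nz:
  assumes "scond \<tau> f y" "y \<in> Lset \<tau> j" "data (ev \<tau> y) \<noteq> 0"
  shows "\<exists>w\<in>Lw \<tau> j. data (ev \<tau> w) = data (ev \<tau> y) \<and> f w \<le> f y \<and>
           (\<forall>z\<in>Lw \<tau> j. f z \<le> f y \<longrightarrow> f z \<le> f w)"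
proof -
  define U where "U = {x\<in>pos \<tau>. op (ev \<tau> x) = W \<and> loc (ev \<tau> x) = loc (ev \<tau> y) \<and> f x \<le> f y}"
  have ly: "loc (ev \<tau> y) = j" using assms(2) by (auto simp: Lset_def)
  have "U \<noteq> {}" using assms(1,3) unfolding scond_def Let_def U_def by auto
  then obtain x where x: "x \<in> U" "\<forall>z\<in>U. f z \<le> f x" "data (ev \<tau> y) = data (ev \<tau> x)"
    using assms(1) unfolding scond_def Let_def U_def by auto
  have "x \<in> Lw \<tau> j" using x(1) ly by (auto simp: U_def Lw_def Lset_def)
  moreover have "\<forall>z\<in>Lw \<tau> j. f z \<le> f y \<longrightarrow> f z \<le> f x"
    using x(2) ly by (auto simp: U_def Lw_def Lset_def)
  ultimately show ?thesis using x(1,3) by (auto simp: U_def)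
qed

lemma fwd_acyclic:
  assumes un: "unambiguous \<tau>" and bij: "bij_betw f (pos \<tau>) (pos \<tau>)"
    and mr: "\<forall>i u v. (u,v)\<in>Mrel \<tau> i \<longrightarrow> f u < f v"
    and sc: "\<forall>y\<in>pos \<tau>. scond \<tau> f y"
    and om: "\<forall>j. \<Omega> \<tau> j = {(a,b). a \<in> Lw \<tau> j \<and> b \<in> Lw \<tau> j \<and> f a < f b}"
  shows "acyclic (cgraph n m \<Omega> \<tau>)"
proof (rule acyc_of_rank[where h = f])
  have inj: "inj_on f (pos \<tau>)" using bij by (simp add: bij_betw_def)
  have oe: "f x < f y" if xy: "(x,y) \<in> Omega_e \<Omega> \<tau> j" for x y j
  proof -
    have xL: "x \<in> Lset \<tau> j" and yL: "y \<in> Lset \<tau> j" using xy by (auto simp: Omega_e_def)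
    have xp: "x \<in> pos \<tau>" and yp: "y \<in> pos \<tau>" using xL yL by (auto simp: Lset_def)
    have scx: "scond \<tau> f x" and scy: "scond \<tau> f y" using sc xp yp by auto
    consider (c1) "data (ev \<tau> x) = data (ev \<tau> y)" "op (ev \<tau> x) = W" "op (ev \<tau> y) = R"
      | (c2) "data (ev \<tau> x) = 0" "data (ev \<tau> y) \<noteq> 0"
      | (c3) a b where "a\<in>Lw \<tau> j" "b\<in>Lw \<tau> j" "(a, b) \<in> \<Omega> \<tau> j"
          "data (ev \<tau> a) = data (ev \<tau> x)" "data (ev \<tau> b) = data (ev \<tau> y)"
      using xy unfolding Omega_e_def by (simp only: mem_Collect_eq case_prod_conv) (elim conjE disjE bexE; metis)
    then show ?thesis
    proof cases
      case c1
      have xw: "x \<in> Lw \<tau> j" using xL c1 by (auto simp: Lw_def)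
      have "data (ev \<tau> y) \<noteq> 0" using unamb_nz[OF un xw] c1 by simp
      then obtain w where w: "w\<in>Lw \<tau> j" "data (ev \<tau> w) = data (ev \<tau> y)" "f w \<le> f y"
        using sc_nz[OF scy yL] by blast
      have "w = x" using unamb_eq[OF un w(1) xw] w(2) c1 by simp
      moreover have "x \<noteq> y" using c1 by auto
      ultimately show ?thesis using w(3) inj xp yp by (metis inj_onD le_neq_implies_less)
    next
      case c2
      then obtain w where w: "w\<in>Lw \<tau> j" "f w \<le> f y"
        using sc_nz[OF scy yL] by blast
      have "f x < f w" using sc_zero[OF scx xL c2(1) un w(1)] .
      then show ?thesis using w by simp
    next
      case c3
      have "f a < f b" using c3 om by auto
      have "data (ev \<tau> x) \<noteq> 0" using unamb_nz[OF un c3(1)] c3 by simp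
      then obtain w where w: "w\<in>Lw \<tau> j" "data (ev \<tau> w) = data (ev \<tau> x)"
          "\<forall>z\<in>Lw \<tau> j. f z \<le> f x \<longrightarrow> f z \<le> f w"
        using sc_nz[OF scx xL] by blast
      have "w = a" using unamb_eq[OF un w(1) c3(1)] w(2) c3 by simp
      then have "f x < f b" using w(3) c3(2) \<open>f a < f b\<close> by (meson leD leI)
      have "data (ev \<tau> y) \<noteq> 0" using unamb_nz[OF un c3(2)] c3 by simp
      then obtain w' where w': "w'\<in>Lw \<tau> j" "data (ev \<tau> w') = data (ev \<tau> y)" "f w' \<le> f y"
        using sc_nz[OF scy yL] by blast
      have "w' = b" using unamb_eq[OF un w'(1) c3(2)] w'(2) c3 by simp
      then show ?thesis using w'(3) \<open>f x < f b\<close> by simp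
    qed
  qed
  show "cgraph n m \<Omega> \<tau> \<subseteq> {(x, y). f x < f y}"
    unfolding cgraph_def using mr oe by auto
qed


lemma card_pos[simp]: "card (pos \<tau>) = length \<tau>" by (simp add: pos_def)
lemma finite_pos[simp]: "finite (pos \<tau>)" by (simp add: pos_def)

lemma bwd_sc:
  assumes un: "unambiguous \<tau>" and ac: "acyclic (cgraph n m \<Omega> \<tau>)"
    and slo: "\<forall>j\<in>{1..m}. strict_linear_order_on (Lw \<tau> j) (\<Omega> \<tau> j)"
    and rng: "\<forall>k\<in>pos \<tau>. proc (ev \<tau> k) \<in> {1..n} \<and> loc (ev \<tau> k) \<in> {1..m}"
    and caus: "\<forall>j. \<forall>x\<in>Lr \<tau> j. data (ev \<tau> x) = 0 \<or> (\<exists>y\<in>Lw \<tau> j. data (ev \<tau> x) = data (ev \<tau> y))"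
  shows "seq_consistent \<tau>"
proof -
  obtain f where bf: "bij_betw f (pos \<tau>) {1..card (pos \<tau>)}"
    and ed: "\<forall>u v. (u,v)\<in>cgraph n m \<Omega> \<tau> \<longrightarrow> u\<in>pos \<tau> \<longrightarrow> v\<in>pos \<tau> \<longrightarrow> f u < f v"
    using topo[OF finite_pos ac] by blast
  have bij: "bij_betw f (pos \<tau>) (pos \<tau>)" using bf by (simp add: pos_def)
  have mr: "\<forall>i u v. (u,v)\<in>Mrel \<tau> i \<longrightarrow> f u < f v"
  proof (intro allI impI)
    fix i u v assume uv: "(u,v)\<in>Mrel \<tau> i"
    then have "u \<in> pos \<tau>" "v \<in> pos \<tau>" "proc (ev \<tau> u) = i" by (auto simp: Mrel_def Pset_def)
    then have "i \<in> {1..n}" using rng by auto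
    then have "(u,v) \<in> cgraph n m \<Omega> \<tau>" using uv unfolding cgraph_def by blast
    then show "f u < f v" using ed \<open>u \<in> pos \<tau>\<close> \<open>v \<in> pos \<tau>\<close> by blast
  qed
  have oe: "f x < f z" if "j \<in> {1..m}" "(x,z) \<in> Omega_e \<Omega> \<tau> j" for j x z
  proof -
    have "x \<in> pos \<tau>" "z \<in> pos \<tau>" using that(2) by (auto simp: Omega_e_def Lset_def)
    moreover have "(x,z) \<in> cgraph n m \<Omega> \<tau>" using that unfolding cgraph_def by blast
    ultimately show ?thesis using ed by blast
  qed
  have "\<forall>y\<in>pos \<tau>. scond \<tau> f y"
  proof
    fix y assume yp: "y \<in> pos \<tau>"
    define j where "j = loc (ev \<tau> y)"
    have jm: "j \<in> {1..m}" using rng yp unfolding j_def by auto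
    have yL: "y \<in> Lset \<tau> j" using yp unfolding j_def Lset_def by auto
    define U where "U = {x\<in>pos \<tau>. op (ev \<tau> x) = W \<and> loc (ev \<tau> x) = loc (ev \<tau> y) \<and> f x \<le> f y}"
    have UL: "U \<subseteq> Lw \<tau> j" unfolding U_def Lw_def Lset_def j_def by auto
    have goal: "(U = {} \<longrightarrow> data (ev \<tau> y) = 0) \<and>
     (U \<noteq> {} \<longrightarrow> (\<exists>x\<in>U. (\<forall>z\<in>U. f z \<le> f x) \<and> data (ev \<tau> y) = data (ev \<tau> x)))"
    proof (cases "op (ev \<tau> y)")
      case W
      have "y \<in> U" unfolding U_def using yp W by auto
      moreover have "\<forall>z\<in>U. f z \<le> f y" unfolding U_def by auto
      ultimately show ?thesis by blast
    next
      case R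
      show ?thesis
      proof (cases "data (ev \<tau> y) = 0")
        case True
        have "U = {}"
        proof (rule ccontr)
          assume "U \<noteq> {}"
          then obtain z where z: "z \<in> U" by blast
          then have zw: "z \<in> Lw \<tau> j" using UL by auto
          have "data (ev \<tau> z) \<noteq> 0" using unamb_nz[OF un zw] .
          then have "(y,z) \<in> Omega_e \<Omega> \<tau> j" using True yL zw unfolding Omega_e_def Lw_def by auto
          then have "f y < f z" using oe jm by blast
          then show False using z unfolding U_def by auto
        qed
        then show ?thesis using True by simp
      next
        case False
        have "y \<in> Lr \<tau> j" using yL R by (auto simp: Lr_def)
        then have "data (ev \<tau> y) = 0 \<or> (\<exists>w\<in>Lw \<tau> j. data (ev \<tau> y) = data (ev \<tau> w))"
          using caus by blast
        then obtain w where w: "w \<in> Lw \<tau> j" "data (ev \<tau> y) = data (ev \<tau> w)" using False by blast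
        have wL: "w \<in> Lset \<tau> j" "op (ev \<tau> w) = W" using w by (auto simp: Lw_def)
        have "(w,y) \<in> Omega_e \<Omega> \<tau> j" using w wL yL R unfolding Omega_e_def by auto
        then have "f w < f y" using oe jm by blast
        then have wU: "w \<in> U" using w unfolding U_def Lw_def Lset_def j_def by auto
        have "\<forall>z\<in>U. f z \<le> f w"
        proof
          fix z assume z: "z \<in> U"
          then have zw: "z \<in> Lw \<tau> j" using UL by auto
          have zL: "z \<in> Lset \<tau> j" using zw by (auto simp: Lw_def)
          show "f z \<le> f w"
          proof (cases "z = w")
            case False
            have "total_on (Lw \<tau> j) (\<Omega> \<tau> j)" using slo jm by (auto simp: strict_linear_order_on_def)
            then have "(z,w) \<in> \<Omega> \<tau> j \<or> (w,z) \<in> \<Omega> \<tau> j" using False zw w(1) by (auto simp: total_on_def)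
            then show ?thesis
            proof
              assume "(z,w) \<in> \<Omega> \<tau> j"
              then have "(z,w) \<in> Omega_e \<Omega> \<tau> j" using zw w(1) zL wL unfolding Omega_e_def by blast
              then show ?thesis using oe jm by fastforce
            next
              assume "(w,z) \<in> \<Omega> \<tau> j"
              then have "(y,z) \<in> Omega_e \<Omega> \<tau> j" using zw w zL yL unfolding Omega_e_def by auto
              then have "f y < f z" using oe jm by blast
              then show ?thesis using z unfolding U_def by auto
            qed
          qed simp
        qed
        then show ?thesis using wU w(2) by blast
      qed
    qed
    show "scond \<tau> f y" unfolding scond_def Let_def U_def[symmetric] using goal .
  qed
  then have "serial (permute \<tau> f)" using serial_iff[OF bij] by blast
  then show ?thesis unfolding seq_consistent_def using bij mr by blast
qed

lemma ev_in_set: "k \<in> pos \<tau> \<Longrightarrow> ev \<tau> k \<in> set \<tau>"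
  by (auto simp: pos_def ev_def)

lemma rename_sc:
  assumes sc: "seq_consistent \<tau>'" and ren: "renaming m v lam"
    and locs: "\<forall>k\<in>pos \<tau>'. loc (ev \<tau>' k) \<in> {1..m}"
  shows "seq_consistent (map (rename_ev lam) \<tau>')"
proof -
  define \<tau> where "\<tau> = map (rename_ev lam) \<tau>'"
  have pp: "pos \<tau> = pos \<tau>'" by (simp add: \<tau>_def pos_def)
  have evr: "ev \<tau> k = rename_ev lam (ev \<tau>' k)" if "k \<in> pos \<tau>'" for k
    using that by (auto simp: \<tau>_def ev_def pos_def)
  have ops: "op (rename_ev lam e) = op e" "proc (rename_ev lam e) = proc e" "loc (rename_ev lam e) = loc e"
    "data (rename_ev lam e) = lam (loc e) (data e)" for e
    by (auto simp: rename_ev_def op_def proc_def loc_def data_def)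
  have PP: "Pset \<tau> i = Pset \<tau>' i" for i unfolding Pset_def pp by (rule Collect_cong) (auto simp: evr ops)
  have MM: "Mrel \<tau> i = Mrel \<tau>' i" for i unfolding Mrel_def PP ..
  obtain f where bij: "bij_betw f (pos \<tau>') (pos \<tau>')" and mr: "\<forall>i u v. (u,v)\<in>Mrel \<tau>' i \<longrightarrow> f u < f v"
    and ser: "serial (permute \<tau>' f)" using sc unfolding seq_consistent_def by blast
  have s': "\<forall>y\<in>pos \<tau>'. scond \<tau>' f y" using serial_iff[OF bij] ser by blast
  have "\<forall>y\<in>pos \<tau>. scond \<tau> f y"
  proof
    fix y assume y: "y \<in> pos \<tau>"
    then have y': "y \<in> pos \<tau>'" using pp by simp
    define U where "U = {x\<in>pos \<tau>'. op (ev \<tau>' x) = W \<and> loc (ev \<tau>' x) = loc (ev \<tau>' y) \<and> f x \<le> f y}"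
    have UU: "{x\<in>pos \<tau>. op (ev \<tau> x) = W \<and> loc (ev \<tau> x) = loc (ev \<tau> y) \<and> f x \<le> f y} = U"
      unfolding U_def pp using y' by (intro Collect_cong) (auto simp: evr ops)
    have lm: "lam (loc (ev \<tau>' y)) 0 = 0" using locs y' ren unfolding renaming_def by auto
    have "scond \<tau>' f y" using s' y' by blast
    then have h: "(U = {} \<longrightarrow> data (ev \<tau>' y) = 0) \<and>
     (U \<noteq> {} \<longrightarrow> (\<exists>x\<in>U. (\<forall>z\<in>U. f z \<le> f x) \<and> data (ev \<tau>' y) = data (ev \<tau>' x)))"
      unfolding scond_def Let_def U_def .
    have "(U = {} \<longrightarrow> data (ev \<tau> y) = 0) \<and>
     (U \<noteq> {} \<longrightarrow> (\<exists>x\<in>U. (\<forall>z\<in>U. f z \<le> f x) \<and> data (ev \<tau> y) = data (ev \<tau> x)))"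
    proof (intro conjI impI)
      assume "U = {}" then show "data (ev \<tau> y) = 0" using h lm by (simp add: evr[OF y'] ops)
    next
      assume "U \<noteq> {}"
      then obtain x where x: "x\<in>U" "\<forall>z\<in>U. f z \<le> f x" "data (ev \<tau>' y) = data (ev \<tau>' x)" using h by blast
      have "x \<in> pos \<tau>'" "loc (ev \<tau>' x) = loc (ev \<tau>' y)" using x(1) unfolding U_def by auto
      then have "data (ev \<tau> y) = data (ev \<tau> x)" using x(3) y' by (simp add: evr ops)
      then show "\<exists>x\<in>U. (\<forall>z\<in>U. f z \<le> f x) \<and> data (ev \<tau> y) = data (ev \<tau> x)" using x by blast
    qed
    then show "scond \<tau> f y" unfolding scond_def Let_def UU .
  qed
  moreover have bij2: "bij_betw f (pos \<tau>) (pos \<tau>)" using bij pp by simp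
  ultimately have "serial (permute \<tau> f)" using serial_iff[OF bij2] by blast
  then show ?thesis unfolding \<tau>_def[symmetric] seq_consistent_def using bij2 mr MM by auto
qed

lemma trace_in_E:
  assumes "memory_system Ea S" "n \<ge> 1" "m \<ge> 1" "v \<ge> 1" "\<tau> \<in> traces S n m v"
  shows "set \<tau> \<subseteq> E n m v"
proof
  fix e assume e: "e \<in> set \<tau>"
  obtain r where r: "r \<in> S n m v" "\<tau> = trace_of r" using assms(5) unfolding traces_def by blast
  have ms: "(\<forall>e. Mem e \<in> Ea n m v \<longleftrightarrow> e \<in> E n m v) \<and> regular_on (Ea n m v) (S n m v)"
    using assms(1-4) unfolding memory_system_def by blast
  then have "set r \<subseteq> Ea n m v" using r(1) unfolding regular_on_def by blast
  obtain l where l: "l \<in> set r" "is_mem l" "e = the_mem l" using e r(2) unfolding trace_of_def by auto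
  have "l = Mem e" using l(2,3) by (cases l) auto
  then show "e \<in> E n m v" using l(1) \<open>set r \<subseteq> Ea n m v\<close> ms by blast
qed

lemma trace_rng:
  assumes "memory_system Ea S" "n \<ge> 1" "m \<ge> 1" "v \<ge> 1" "\<tau> \<in> traces S n m v"
  shows "\<forall>k\<in>pos \<tau>. proc (ev \<tau> k) \<in> {1..n} \<and> loc (ev \<tau> k) \<in> {1..m}"
  using trace_in_E[OF assms] ev_in_set unfolding E_def by blast


theorem corollary5p4:
  fixes Ea :: "nat \<Rightarrow> nat \<Rightarrow> nat \<Rightarrow> 'i letter set"
    and S :: "nat \<Rightarrow> nat \<Rightarrow> nat \<Rightarrow> 'i letter list set"
  assumes "memory_system Ea S"
    and "causality S"
    and "data_independence S"
    and "n \<ge> 1" and "m \<ge> 1"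
  shows "(\<forall>\<tau>\<in>traces_nm S n m. seq_consistent \<tau>) \<longleftrightarrow>
         (\<exists>\<Omega>. witness S n m \<Omega> \<and>
               (\<forall>\<tau>\<in>traces_nm S n m. unambiguous \<tau> \<longrightarrow> acyclic (cgraph n m \<Omega> \<tau>)))"
proof
  assume SC: "\<forall>\<tau>\<in>traces_nm S n m. seq_consistent \<tau>"
  define F where "F \<tau> = (SOME f. bij_betw f (pos \<tau>) (pos \<tau>) \<and> (\<forall>i u v. (u, v) \<in> Mrel \<tau> i \<longrightarrow> f u < f v)
      \<and> serial (permute \<tau> f))" for \<tau>
  define \<Omega> where "\<Omega> \<tau> j = {(a,b). a \<in> Lw \<tau> j \<and> b \<in> Lw \<tau> j \<and> F \<tau> a < F \<tau> b}" for \<tau> j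
  have Fp: "bij_betw (F \<tau>) (pos \<tau>) (pos \<tau>) \<and> (\<forall>i u v. (u, v) \<in> Mrel \<tau> i \<longrightarrow> F \<tau> u < F \<tau> v)
      \<and> serial (permute \<tau> (F \<tau>))" if "\<tau> \<in> traces_nm S n m" for \<tau>
  proof -
    have "\<exists>f. bij_betw f (pos \<tau>) (pos \<tau>) \<and> (\<forall>i u v. (u, v) \<in> Mrel \<tau> i \<longrightarrow> f u < f v)
      \<and> serial (permute \<tau> f)" using SC that unfolding seq_consistent_def by blast
    then show ?thesis unfolding F_def by (rule someI_ex)
  qed
  have "witness S n m \<Omega>"
    unfolding witness_def
  proof (intro ballI conjI)
    fix \<tau> j assume t: "\<tau> \<in> traces_nm S n m" and "j \<in> {1..m}"
    show "\<Omega> \<tau> j \<subseteq> Lw \<tau> j \<times> Lw \<tau> j" unfolding \<Omega>_def by auto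
    have inj: "inj_on (F \<tau>) (pos \<tau>)" using conjunct1[OF Fp[OF t]] by (rule bij_betw_imp_inj_on)
    have "Lw \<tau> j \<subseteq> pos \<tau>" by (auto simp: Lw_def Lset_def)
    then show "strict_linear_order_on (Lw \<tau> j) (\<Omega> \<tau> j)"
      unfolding strict_linear_order_on_def
    proof (intro conjI)
      show "trans (\<Omega> \<tau> j)" by (rule transI) (auto simp: \<Omega>_def)
      show "irrefl (\<Omega> \<tau> j)" by (auto simp: irrefl_def \<Omega>_def)
      show "total_on (Lw \<tau> j) (\<Omega> \<tau> j)" unfolding total_on_def
      proof (intro ballI impI)
        fix x y assume xy: "x \<in> Lw \<tau> j" "y \<in> Lw \<tau> j" "x \<noteq> y"
        have "x \<in> pos \<tau>" "y \<in> pos \<tau>" using xy \<open>Lw \<tau> j \<subseteq> pos \<tau>\<close> by auto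
        then have "F \<tau> x \<noteq> F \<tau> y" using inj xy(3) by (meson inj_onD)
        then show "(x, y) \<in> \<Omega> \<tau> j \<or> (y, x) \<in> \<Omega> \<tau> j" using xy unfolding \<Omega>_def by auto
      qed
    qed
  qed
  moreover have "\<forall>\<tau>\<in>traces_nm S n m. unambiguous \<tau> \<longrightarrow> acyclic (cgraph n m \<Omega> \<tau>)"
  proof (intro ballI impI)
    fix \<tau> assume t: "\<tau> \<in> traces_nm S n m" and un: "unambiguous \<tau>"
    have bij: "bij_betw (F \<tau>) (pos \<tau>) (pos \<tau>)" using conjunct1[OF Fp[OF t]] .
    have mr: "\<forall>i u v. (u, v) \<in> Mrel \<tau> i \<longrightarrow> F \<tau> u < F \<tau> v" using Fp[OF t] by (elim conjE)
    have se: "serial (permute \<tau> (F \<tau>))" using Fp[OF t] by (elim conjE)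
    have sc: "\<forall>y\<in>pos \<tau>. scond \<tau> (F \<tau>) y" using serial_iff[OF bij] se by (rule iffD1)
    have om: "\<forall>j. \<Omega> \<tau> j = {(a,b). a \<in> Lw \<tau> j \<and> b \<in> Lw \<tau> j \<and> F \<tau> a < F \<tau> b}"
      unfolding \<Omega>_def by (rule allI) (rule refl)
    show "acyclic (cgraph n m \<Omega> \<tau>)" by (rule fwd_acyclic[where \<Omega> = \<Omega>, OF un bij mr sc om])
  qed
  ultimately show "\<exists>\<Omega>. witness S n m \<Omega> \<and>
               (\<forall>\<tau>\<in>traces_nm S n m. unambiguous \<tau> \<longrightarrow> acyclic (cgraph n m \<Omega> \<tau>))" by blast
next
  assume "\<exists>\<Omega>. witness S n m \<Omega> \<and>
               (\<forall>\<tau>\<in>traces_nm S n m. unambiguous \<tau> \<longrightarrow> acyclic (cgraph n m \<Omega> \<tau>))"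
  then obtain \<Omega> where wit: "witness S n m \<Omega>"
    and ac: "\<forall>\<tau>\<in>traces_nm S n m. unambiguous \<tau> \<longrightarrow> acyclic (cgraph n m \<Omega> \<tau>)" by blast
  have scu: "seq_consistent \<tau>'" if t': "\<tau>' \<in> traces_nm S n m" and un: "unambiguous \<tau>'" for \<tau>'
  proof -
    obtain v' where v': "v' \<ge> 1" "\<tau>' \<in> traces S n m v'" using t' unfolding traces_nm_def by auto
    show ?thesis
    proof (rule bwd_sc[OF un])
      show "acyclic (cgraph n m \<Omega> \<tau>')" using ac t' un by blast
      show "\<forall>j\<in>{1..m}. strict_linear_order_on (Lw \<tau>' j) (\<Omega> \<tau>' j)" using wit t' unfolding witness_def by blast
      show "\<forall>k\<in>pos \<tau>'. proc (ev \<tau>' k) \<in> {1..n} \<and> loc (ev \<tau>' k) \<in> {1..m}"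
        by (rule trace_rng[OF assms(1,4,5) v'])
      show "\<forall>j. \<forall>x\<in>Lr \<tau>' j. data (ev \<tau>' x) = 0 \<or> (\<exists>y\<in>Lw \<tau>' j. data (ev \<tau>' x) = data (ev \<tau>' y))"
      proof -
        have "n \<ge> 1 \<and> m \<ge> 1 \<and> v' \<ge> 1 \<longrightarrow> (\<forall>\<tau>\<in>traces S n m v'. \<forall>j. \<forall>x\<in>Lr \<tau> j.
          data (ev \<tau> x) = 0 \<or> (\<exists>y\<in>Lw \<tau> j. data (ev \<tau> x) = data (ev \<tau> y)))"
          using assms(2) unfolding causality_def by (rule spec[of _ v', OF spec[of _ m, OF spec[of _ n]]])
        then show ?thesis using assms(4,5) v' by blast
      qed
    qed
  qed
  show "\<forall>\<tau>\<in>traces_nm S n m. seq_consistent \<tau>"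
  proof
    fix \<tau> assume t: "\<tau> \<in> traces_nm S n m"
    obtain v where v: "v \<ge> 1" "\<tau> \<in> traces S n m v" using t unfolding traces_nm_def by auto
    have "set \<tau> \<subseteq> E n m v" by (rule trace_in_E[OF assms(1,4,5) v])
    then obtain \<tau>' lam where t': "\<tau>' \<in> traces_nm S n m" "unambiguous \<tau>'" "renaming m v lam"
       "\<tau> = map (rename_ev lam) \<tau>'"
    proof -
      have "n \<ge> 1 \<and> m \<ge> 1 \<and> v \<ge> 1 \<longrightarrow> (\<forall>\<tau>. set \<tau> \<subseteq> E n m v \<longrightarrow>
          (\<tau> \<in> traces S n m v \<longleftrightarrow>
            (\<exists>\<tau>'\<in>traces_nm S n m. unambiguous \<tau>' \<and>
               (\<exists>lam. renaming m v lam \<and> \<tau> = map (rename_ev lam) \<tau>'))))"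
        using assms(3) unfolding data_independence_def by (rule spec[of _ v, OF spec[of _ m, OF spec[of _ n]]])
      then have "\<exists>\<tau>'\<in>traces_nm S n m. unambiguous \<tau>' \<and>
               (\<exists>lam. renaming m v lam \<and> \<tau> = map (rename_ev lam) \<tau>')"
        using assms(4,5) v \<open>set \<tau> \<subseteq> E n m v\<close> by blast
      then show ?thesis using that by blast
    qed
    obtain v' where v': "v' \<ge> 1" "\<tau>' \<in> traces S n m v'" using t'(1) unfolding traces_nm_def by auto
    have "\<forall>k\<in>pos \<tau>'. loc (ev \<tau>' k) \<in> {1..m}" using trace_rng[OF assms(1,4,5) v'] by blast
    then show "seq_consistent \<tau>" using rename_sc[OF scu[OF t'(1,2)] t'(3)] t'(4) by simp
  qed
qed

end
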